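(* There exists a countable abelian group $A$ of torsion-free rank $1$ such that $IAut(A)$ contains a subgroup $\Sigma\cong\prod_p\mathbb{Z}(p)$ with $\Sigma\cap FAut(A)=T(\Sigma)\cong\bigoplus_p\mathbb{Z}(p)$, where $p$ ranges over all primes.
   Context: Abelian groups are written additively. An automorphism $\varphi$ of $A$ is inertial if $(\varphi(X)+X)/X$ is finite for every subgroup $X\le A$; $IAut(A)$ is the subgroup of $\mathrm{Aut}(A)$ generated by the inertial automorphisms. $FAut(A)$ is the group of automorphisms acting as the identity on some subgroup of finite index of $A$. $T(\Sigma)$ denotes the set of elements of finite order of the abelian group $\Sigma$, and $\mathbb{Z}(p)$ is the cyclic group of order $p$. *)

theory Defs
  imports "HOL-Algebra.Algebra"
begin

definition torsion_free_rank_one :: "('a, 'b) monoid_scheme \<Rightarrow> bool" where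
  "torsion_free_rank_one G \<longleftrightarrow>
     (\<exists>a\<in>carrier G. \<forall>n::int. n \<noteq> 0 \<longrightarrow> a [^]\<^bsub>G\<^esub> n \<noteq> \<one>\<^bsub>G\<^esub>) \<and>
     (\<forall>x\<in>carrier G. \<forall>y\<in>carrier G. \<exists>(m::int) (n::int). (m \<noteq> 0 \<or> n \<noteq> 0) \<and>
        x [^]\<^bsub>G\<^esub> m \<otimes>\<^bsub>G\<^esub> y [^]\<^bsub>G\<^esub> n = \<one>\<^bsub>G\<^esub>)"

definition inertial :: "('a, 'b) monoid_scheme \<Rightarrow> ('a \<Rightarrow> 'a) \<Rightarrow> bool" where
  "inertial G \<phi> \<longleftrightarrow> \<phi> \<in> auto G \<and>
     (\<forall>Y. subgroup Y G \<longrightarrow>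
        finite (RCOSETS (G\<lparr>carrier := set_mult G (\<phi> ` Y) Y\<rparr>) Y))"

definition IAut :: "('a, 'b) monoid_scheme \<Rightarrow> ('a \<Rightarrow> 'a) set" where
  "IAut G = generate (AutoGroup G) {\<phi>. inertial G \<phi>}"

definition FAut :: "('a, 'b) monoid_scheme \<Rightarrow> ('a \<Rightarrow> 'a) set" where
  "FAut G = {\<phi> \<in> auto G. \<exists>H. subgroup H G \<and> finite (rcosets\<^bsub>G\<^esub> H) \<and> (\<forall>x\<in>H. \<phi> x = x)}"

definition torsion_part :: "('a, 'b) monoid_scheme \<Rightarrow> 'a set" where
  "torsion_part G = {x \<in> carrier G. \<exists>n::nat. n > 0 \<and> x [^]\<^bsub>G\<^esub> n = \<one>\<^bsub>G\<^esub>}"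

text \<open>The set of all (rational) primes; the qualified name avoids the HOL-Algebra
  notion of prime element of a monoid.\<close>
definition nat_primes :: "nat set" where
  "nat_primes = {p. Factorial_Ring.prime p}"

end

theory Submission
  imports Defs "HOL-Number_Theory.Cong"
begin

abbreviation pr :: "nat \<Rightarrow> bool" where "pr p \<equiv> Factorial_Ring.prime p"

type_synonym E = "int \<times> (nat \<Rightarrow> int)"

definition Eset :: "E set" where
  "Eset = {e. (\<forall>p. (pr p \<longrightarrow> 0 \<le> snd e p \<and> snd e p < int p ^ 2) \<and> (\<not> pr p \<longrightarrow> snd e p = 0))
              \<and> finite {p. snd e p \<noteq> 0}}"

definition Eadd :: "E \<Rightarrow> E \<Rightarrow> E" where
  "Eadd a b = (fst a + fst b, \<lambda>p. (snd a p + snd b p) mod (int p ^ 2))"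
definition Esm :: "int \<Rightarrow> E \<Rightarrow> E" where
  "Esm m a = (m * fst a, \<lambda>p. (m * snd a p) mod (int p ^ 2))"
definition Ezero :: E where "Ezero = (0, \<lambda>p. 0)"
definition Ealpha :: "(nat \<Rightarrow> int) \<Rightarrow> E \<Rightarrow> E" where
  "Ealpha k a = (fst a, \<lambda>p. (snd a p * (1 + k p * int p)) mod (int p ^ 2))"
definition Edelta :: "(nat \<Rightarrow> int) \<Rightarrow> E \<Rightarrow> E" where
  "Edelta k a = (0, \<lambda>p. (snd a p * (k p * int p)) mod (int p ^ 2))"

lemma EsetD:
  assumes "e \<in> Eset"
  shows "pr p \<Longrightarrow> 0 \<le> snd e p" "pr p \<Longrightarrow> snd e p < int p ^ 2" "\<not> pr p \<Longrightarrow> snd e p = 0"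
    "finite {p. snd e p \<noteq> 0}"
  using assms by (auto simp: Eset_def)

lemma prime_sq_pos: "pr p \<Longrightarrow> (0::int) < int p ^ 2"
  using prime_gt_0_nat by auto

lemma Eset_modI:
  assumes "\<And>p. \<not> pr p \<Longrightarrow> h p = 0" "finite {p. h p \<noteq> 0}"
  shows "(n, \<lambda>p. h p mod (int p ^ 2)) \<in> Eset"
proof -
  have "{p. h p mod (int p ^ 2) \<noteq> 0} \<subseteq> {p. h p \<noteq> 0}" by auto
  then have "finite {p. h p mod (int p ^ 2) \<noteq> 0}" using assms(2) finite_subset by blast
  moreover have "pr p \<Longrightarrow> 0 \<le> h p mod (int p ^ 2) \<and> h p mod (int p ^ 2) < int p ^ 2" for p
    using prime_sq_pos[of p] by auto
  ultimately show ?thesis using assms(1) unfolding Eset_def by auto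
qed

lemma Eset_red: "e \<in> Eset \<Longrightarrow> snd e p mod (int p ^ 2) = snd e p"
  by (cases "pr p") (auto simp: EsetD)

lemma Eadd_Eset: "a \<in> Eset \<Longrightarrow> b \<in> Eset \<Longrightarrow> Eadd a b \<in> Eset"
  unfolding Eadd_def
proof (rule Eset_modI)
  assume a: "a \<in> Eset" and b: "b \<in> Eset"
  show "\<not> pr p \<Longrightarrow> snd a p + snd b p = 0" for p using a b by (simp add: EsetD)
  have "{p. snd a p + snd b p \<noteq> 0} \<subseteq> {p. snd a p \<noteq> 0} \<union> {p. snd b p \<noteq> 0}" by auto
  then show "finite {p. snd a p + snd b p \<noteq> 0}" using a b EsetD(4) finite_subset by blast
qed

lemma Esm_Eset: "a \<in> Eset \<Longrightarrow> Esm m a \<in> Eset"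
  unfolding Esm_def
proof (rule Eset_modI)
  assume a: "a \<in> Eset"
  show "\<not> pr p \<Longrightarrow> m * snd a p = 0" for p using a by (simp add: EsetD)
  have "{p. m * snd a p \<noteq> 0} \<subseteq> {p. snd a p \<noteq> 0}" by auto
  then show "finite {p. m * snd a p \<noteq> 0}" using a EsetD(4) finite_subset by blast
qed

lemma Ealpha_Eset: "a \<in> Eset \<Longrightarrow> Ealpha k a \<in> Eset"
  unfolding Ealpha_def
proof (rule Eset_modI)
  assume a: "a \<in> Eset"
  show "\<not> pr p \<Longrightarrow> snd a p * (1 + k p * int p) = 0" for p using a by (simp add: EsetD)
  have "{p. snd a p * (1 + k p * int p) \<noteq> 0} \<subseteq> {p. snd a p \<noteq> 0}" by auto
  then show "finite {p. snd a p * (1 + k p * int p) \<noteq> 0}" using a EsetD(4) finite_subset by blast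
qed

lemma Edelta_Eset: "a \<in> Eset \<Longrightarrow> Edelta k a \<in> Eset"
  unfolding Edelta_def
proof (rule Eset_modI)
  assume a: "a \<in> Eset"
  show "\<not> pr p \<Longrightarrow> snd a p * (k p * int p) = 0" for p using a by (simp add: EsetD)
  have "{p. snd a p * (k p * int p) \<noteq> 0} \<subseteq> {p. snd a p \<noteq> 0}" by auto
  then show "finite {p. snd a p * (k p * int p) \<noteq> 0}" using a EsetD(4) finite_subset by blast
qed

lemma Ezero_Eset: "Ezero \<in> Eset"
  by (simp add: Eset_def Ezero_def)

lemma Eadd_assoc: "Eadd (Eadd a b) c = Eadd a (Eadd b c)"
  by (simp add: Eadd_def mod_add_left_eq mod_add_right_eq add.assoc)

lemma Eadd_comm: "Eadd a b = Eadd b a"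
  by (simp add: Eadd_def add.commute)

lemma Eadd_zero: "a \<in> Eset \<Longrightarrow> Eadd Ezero a = a"
  by (simp add: Eadd_def Ezero_def Eset_red)

lemma Eadd_neg: "Eadd (Esm (-1) a) a = Ezero"
  by (simp add: Eadd_def Esm_def Ezero_def mod_add_left_eq)

lemma Esm_eq_iff: "Esm m a = Esm m' b \<longleftrightarrow> m * fst a = m' * fst b \<and> (\<forall>p. (m * snd a p) mod (int p ^ 2) = (m' * snd b p) mod (int p ^ 2))"
  by (auto simp: Esm_def fun_eq_iff)

definition Ecode :: "E \<Rightarrow> int \<times> int list" where
  "Ecode e = (fst e, map (snd e) [0..<Suc (\<Sum>{p. snd e p \<noteq> 0})])"

lemma Ecode_zero_beyond:
  assumes "e \<in> Eset" "Suc (\<Sum>{p. snd e p \<noteq> 0}) \<le> p" shows "snd e p = 0"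
proof (rule ccontr)
  assume "snd e p \<noteq> 0"
  then have "p \<le> \<Sum>{p. snd e p \<noteq> 0}"
    using EsetD(4)[OF assms(1)] by (intro member_le_sum) auto
  then show False using assms(2) by simp
qed

lemma Ecode_inj: "inj_on Ecode Eset"
proof (rule inj_onI)
  fix a b assume a: "a \<in> Eset" and b: "b \<in> Eset" and eq: "Ecode a = Ecode b"
  let ?Na = "Suc (\<Sum>{p. snd a p \<noteq> 0})" and ?Nb = "Suc (\<Sum>{p. snd b p \<noteq> 0})"
  have f: "fst a = fst b" and m: "map (snd a) [0..<?Na] = map (snd b) [0..<?Nb]"
    using eq by (auto simp: Ecode_def)
  then have N: "?Na = ?Nb" by (metis length_map length_upt minus_nat.diff_0)
  have "snd a p = snd b p" for p
  proof (cases "p < ?Na")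
    case True
    have m': "map (snd a) [0..<?Nb] = map (snd b) [0..<?Nb]" using m by (simp only: N)
    have "\<forall>x\<in>set [0..<?Nb]. snd a x = snd b x" using m' by (simp only: map_eq_conv)
    moreover have "p \<in> set [0..<?Nb]" using True N by (simp only: set_upt atLeastLessThan_iff) simp
    ultimately show ?thesis by blast
  next
    case False
    then have pa: "?Na \<le> p" by simp
    then have pb: "?Nb \<le> p" using N by simp
    show ?thesis by (simp add: Ecode_zero_beyond[OF a pa] Ecode_zero_beyond[OF b pb])
  qed
  then show "a = b" using f by (simp add: prod_eq_iff fun_eq_iff)
qed

lemma Eset_countable: "countable Eset"
  by (rule countable_image_inj_on[OF _ Ecode_inj]) simp

lemma Eset_infinite: "infinite Eset"
proof -
  have "range (\<lambda>n::nat. (int n, \<lambda>p::nat. 0::int)) \<subseteq> Eset" by (auto simp: Eset_def)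
  moreover have "infinite (range (\<lambda>n::nat. (int n, \<lambda>p::nat. 0::int)))"
    by (rule range_inj_infinite) (simp add: inj_def)
  ultimately show ?thesis using infinite_super by blast
qed

definition dec :: "nat \<Rightarrow> E" where "dec = from_nat_into Eset"
definition enc :: "E \<Rightarrow> nat" where "enc = to_nat_on Eset"

lemma dec_Eset[simp]: "dec x \<in> Eset"
  unfolding dec_def using Eset_infinite by (metis finite.emptyI from_nat_into)

lemma enc_dec[simp]: "enc (dec x) = x"
  unfolding dec_def enc_def using Eset_countable Eset_infinite by simp

lemma dec_enc[simp]: "e \<in> Eset \<Longrightarrow> dec (enc e) = e"
  unfolding dec_def enc_def using Eset_countable by simp

lemma dec_inj: "dec x = dec y \<longleftrightarrow> x = y"
  by (metis enc_dec)

lemma enc_inj: "a \<in> Eset \<Longrightarrow> b \<in> Eset \<Longrightarrow> enc a = enc b \<longleftrightarrow> a = b"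
  by (metis dec_enc)

definition A :: "nat monoid" where
  "A = \<lparr>carrier = UNIV, monoid.mult = (\<lambda>x y. enc (Eadd (dec x) (dec y))), one = enc Ezero\<rparr>"

lemma A_simps[simp]: "carrier A = UNIV" "x \<otimes>\<^bsub>A\<^esub> y = enc (Eadd (dec x) (dec y))" "\<one>\<^bsub>A\<^esub> = enc Ezero"
  by (auto simp: A_def)

lemma dec_mult[simp]: "dec (x \<otimes>\<^bsub>A\<^esub> y) = Eadd (dec x) (dec y)"
  by (simp add: Eadd_Eset)

lemma dec_one[simp]: "dec \<one>\<^bsub>A\<^esub> = Ezero"
  by (simp add: Ezero_Eset)

lemma A_comm_group: "comm_group A"
proof (rule comm_groupI)
  fix x y z :: nat
  show "x \<otimes>\<^bsub>A\<^esub> y \<otimes>\<^bsub>A\<^esub> z = x \<otimes>\<^bsub>A\<^esub> (y \<otimes>\<^bsub>A\<^esub> z)"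
    by (simp add: Eadd_Eset Eadd_assoc)
  show "x \<otimes>\<^bsub>A\<^esub> y = y \<otimes>\<^bsub>A\<^esub> x" by (simp add: Eadd_comm)
  show "\<one>\<^bsub>A\<^esub> \<otimes>\<^bsub>A\<^esub> x = x" by (simp add: Ezero_Eset Eadd_zero)
  show "\<exists>y\<in>carrier A. y \<otimes>\<^bsub>A\<^esub> x = \<one>\<^bsub>A\<^esub>"
    by (rule bexI[of _ "enc (Esm (-1) (dec x))"]) (simp_all add: Esm_Eset Eadd_neg)
qed auto

interpretation AG: comm_group A by (rule A_comm_group)

lemma Esm_Esm: "Esm a (Esm b e) = Esm (a*b) e"
  by (simp add: Esm_def mod_mult_right_eq mult.assoc)

lemma Esm_Suc: "e \<in> Eset \<Longrightarrow> Eadd (Esm m e) e = Esm (m + 1) e"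
  by (simp add: Eadd_def Esm_def mod_add_left_eq mod_add_right_eq algebra_simps)

lemma Esm_0: "Esm 0 e = Ezero"
  by (simp add: Esm_def Ezero_def)

lemma dec_pow_nat: "dec (x [^]\<^bsub>A\<^esub> (n::nat)) = Esm (int n) (dec x)"
proof (induction n)
  case 0
  then show ?case by (simp add: Esm_0 Ezero_Eset)
next
  case (Suc n)
  then show ?case by (simp add: Esm_Suc Esm_Eset add.commute)
qed

lemma inv_A: "inv\<^bsub>A\<^esub> x = enc (Esm (-1) (dec x))"
  by (rule AG.inv_equality) (simp_all add: Esm_Eset Eadd_neg)

lemma dec_inv: "dec (inv\<^bsub>A\<^esub> x) = Esm (-1) (dec x)"
  by (simp add: inv_A Esm_Eset)

lemma dec_pow_int: "dec (x [^]\<^bsub>A\<^esub> (i::int)) = Esm i (dec x)"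
proof -
  have eq: "x [^]\<^bsub>A\<^esub> i = (if i < 0 then inv\<^bsub>A\<^esub> (x [^]\<^bsub>A\<^esub> nat (-i)) else x [^]\<^bsub>A\<^esub> nat i)"
    by (rule int_pow_def2)
  show ?thesis
  proof (cases "i < 0")
    case True
    then have "dec (x [^]\<^bsub>A\<^esub> i) = Esm (-1) (Esm (int (nat (-i))) (dec x))"
      by (simp only: eq if_True dec_inv dec_pow_nat)
    then show ?thesis using True by (simp add: Esm_Esm)
  next
    case False
    then have "dec (x [^]\<^bsub>A\<^esub> i) = Esm (int (nat i)) (dec x)"
      by (simp only: eq if_False dec_pow_nat)
    then show ?thesis using False by simp
  qed
qed

lemma pow_int_eq: "x [^]\<^bsub>A\<^esub> (i::int) = enc (Esm i (dec x))"
  by (metis dec_pow_int enc_dec)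

definition supp :: "E \<Rightarrow> nat set" where "supp e = {p. snd e p \<noteq> 0}"

definition Mk :: "E \<Rightarrow> int" where "Mk e = (\<Prod>p\<in>supp e. int p ^ 2)"

lemma supp_prime: "e \<in> Eset \<Longrightarrow> p \<in> supp e \<Longrightarrow> pr p"
  unfolding supp_def using EsetD(3)[of e p] by auto

lemma supp_finite: "e \<in> Eset \<Longrightarrow> finite (supp e)"
  using EsetD(4) by (simp add: supp_def)

lemma Mk_pos: "e \<in> Eset \<Longrightarrow> Mk e > 0"
  unfolding Mk_def using supp_prime prime_sq_pos by (intro prod_pos) blast

lemma Mk_dvd: "e \<in> Eset \<Longrightarrow> p \<in> supp e \<Longrightarrow> int p ^ 2 dvd Mk e"
  unfolding Mk_def using supp_finite by (intro dvd_prodI) auto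

lemma Esm_kill:
  assumes "e \<in> Eset" "\<And>p. p \<in> supp e \<Longrightarrow> int p ^ 2 dvd m"
  shows "Esm m e = (m * fst e, \<lambda>p. 0)"
proof -
  have "(m * snd e p) mod (int p ^ 2) = 0" for p
  proof (cases "p \<in> supp e")
    case True
    then show ?thesis using assms(2)[OF True] by simp
  next
    case False
    then show ?thesis by (simp add: supp_def)
  qed
  then show ?thesis by (simp add: Esm_def)
qed

lemma A_tfr1: "torsion_free_rank_one A"
  unfolding torsion_free_rank_one_def
proof (intro conjI ballI)
  let ?a = "enc (1, \<lambda>p. 0)"
  have a: "(1::int, \<lambda>p::nat. 0::int) \<in> Eset" by (simp add: Eset_def)
  show "\<exists>a\<in>carrier A. \<forall>n::int. n \<noteq> 0 \<longrightarrow> a [^]\<^bsub>A\<^esub> n \<noteq> \<one>\<^bsub>A\<^esub>"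
  proof (intro bexI allI impI)
    fix n :: int assume n: "n \<noteq> 0"
    have "dec (?a [^]\<^bsub>A\<^esub> n) = (n, \<lambda>p. 0)" using a by (simp add: dec_pow_int Esm_def)
    moreover have "dec \<one>\<^bsub>A\<^esub> = (0, \<lambda>p. 0)" by (simp only: dec_one Ezero_def)
    ultimately show "?a [^]\<^bsub>A\<^esub> n \<noteq> \<one>\<^bsub>A\<^esub>" using n by (metis prod.inject)
  qed simp
next
  fix x y assume "x \<in> carrier A" "y \<in> carrier A"
  let ?e = "dec x" and ?f = "dec y"
  define M where "M = Mk ?e * Mk ?f"
  have M0: "M \<noteq> 0" using Mk_pos[of ?e] Mk_pos[of ?f] by (simp add: M_def)
  have de: "int p ^ 2 dvd c * M" if "p \<in> supp ?e" for p c
    using Mk_dvd[OF dec_Eset that] by (simp add: M_def)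
  have df: "int p ^ 2 dvd c * M" if "p \<in> supp ?f" for p c
    using Mk_dvd[OF dec_Eset that] by (simp add: M_def)
  have ke: "Esm (c * M) ?e = (c * M * fst ?e, \<lambda>p. 0)" for c
    by (rule Esm_kill[OF dec_Eset de])
  have kf: "Esm (c * M) ?f = (c * M * fst ?f, \<lambda>p. 0)" for c
    by (rule Esm_kill[OF dec_Eset df])
  show "\<exists>(m::int) (n::int). (m \<noteq> 0 \<or> n \<noteq> 0) \<and> x [^]\<^bsub>A\<^esub> m \<otimes>\<^bsub>A\<^esub> y [^]\<^bsub>A\<^esub> n = \<one>\<^bsub>A\<^esub>"
  proof (cases "fst ?e = 0")
    case True
    have eq: "x [^]\<^bsub>A\<^esub> M \<otimes>\<^bsub>A\<^esub> y [^]\<^bsub>A\<^esub> (0::int) = \<one>\<^bsub>A\<^esub>"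
    proof -
      have "dec (x [^]\<^bsub>A\<^esub> M \<otimes>\<^bsub>A\<^esub> y [^]\<^bsub>A\<^esub> (0::int)) = Eadd (Esm M ?e) (Esm 0 ?f)"
        by (simp only: dec_mult dec_pow_int)
      also have "\<dots> = Eadd (1 * M * fst ?e, \<lambda>p. 0) Ezero" by (simp only: Esm_0 ke[of 1, simplified] mult_1)
      also have "\<dots> = Ezero" using True by (simp add: Eadd_def Ezero_def)
      finally show ?thesis by (simp only: dec_one[symmetric] dec_inj)
    qed
    have nz: "M \<noteq> 0 \<or> (0::int) \<noteq> 0" using M0 by simp
    show ?thesis by (rule exI[where x=M], rule exI[where x="0::int"], rule conjI[OF nz eq])
  next
    case False
    have eq: "x [^]\<^bsub>A\<^esub> (fst ?f * M) \<otimes>\<^bsub>A\<^esub> y [^]\<^bsub>A\<^esub> (- fst ?e * M) = \<one>\<^bsub>A\<^esub>"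
    proof -
      have "dec (x [^]\<^bsub>A\<^esub> (fst ?f * M) \<otimes>\<^bsub>A\<^esub> y [^]\<^bsub>A\<^esub> (- fst ?e * M)) = Eadd (Esm (fst ?f * M) ?e) (Esm (- fst ?e * M) ?f)"
        by (simp only: dec_mult dec_pow_int)
      also have "\<dots> = Eadd (fst ?f * M * fst ?e, \<lambda>p. 0) (- fst ?e * M * fst ?f, \<lambda>p. 0)"
        by (simp only: ke kf)
      also have "\<dots> = Ezero" by (simp add: Eadd_def Ezero_def algebra_simps)
      finally show ?thesis by (simp only: dec_one[symmetric] dec_inj)
    qed
    have nz: "fst ?f * M \<noteq> 0 \<or> - fst ?e * M \<noteq> 0" using M0 False by simp
    show ?thesis by (rule exI[where x="fst ?f * M"], rule exI[where x="- fst ?e * M"], rule conjI[OF nz eq])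
  qed
qed

abbreviation PG :: "(nat \<Rightarrow> int) monoid" where "PG \<equiv> product_group nat_primes integer_mod_group"

lemma PG_group: "group PG" by (rule product_group) simp

lemma nat_primes_iff[simp]: "p \<in> nat_primes \<longleftrightarrow> pr p" by (simp add: nat_primes_def)

lemma carrier_PG: "k \<in> carrier PG \<longleftrightarrow> k \<in> extensional nat_primes \<and> (\<forall>p. pr p \<longrightarrow> 0 \<le> k p \<and> k p < int p)"
proof -
  have "carrier (integer_mod_group p) = {0..<int p}" if "pr p" for p
    using that by (auto simp: carrier_integer_mod_group)
  then show ?thesis by (auto simp: PiE_iff)
qed

lemma PG_mult: "k \<otimes>\<^bsub>PG\<^esub> k' = (\<lambda>p\<in>nat_primes. (k p + k' p) mod int p)" by simp
lemma PG_one: "\<one>\<^bsub>PG\<^esub> = (\<lambda>p\<in>nat_primes. 0)" by simp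

lemma int_key:
  fixes f a b p :: int
  shows "(f * (1 + b*p) * (1 + a*p)) mod (p^2) = (f * (1 + ((a+b) mod p) * p)) mod (p^2)"
proof -
  obtain c d where c: "c = (a+b) mod p" and d: "d = (a+b) div p" by blast
  have "a + b = c + p * d" using c d by simp
  then have b: "b = c + p*d - a" by simp
  have "f * (1 + b*p) * (1 + a*p) = f * (1 + c*p) + (f*(d + a*b)) * p^2"
    by (simp add: b algebra_simps power2_eq_square)
  then show ?thesis using c by simp
qed

definition sig :: "(nat \<Rightarrow> int) \<Rightarrow> nat \<Rightarrow> nat" where
  "sig k = (\<lambda>x. enc (Ealpha k (dec x)))"

lemma Ealpha_add: "Ealpha k (Eadd a b) = Eadd (Ealpha k a) (Ealpha k b)"
  by (simp add: Ealpha_def Eadd_def mod_mult_left_eq mod_add_eq distrib_right)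

lemma Ealpha_comp:
  assumes k: "k \<in> carrier PG" and k': "k' \<in> carrier PG" and e: "e \<in> Eset"
  shows "Ealpha k (Ealpha k' e) = Ealpha (k \<otimes>\<^bsub>PG\<^esub> k') e"
proof -
  have "(snd e p * (1 + k' p * int p) mod (int p)\<^sup>2 * (1 + k p * int p)) mod (int p)\<^sup>2
        = (snd e p * (1 + (k \<otimes>\<^bsub>PG\<^esub> k') p * int p)) mod (int p)\<^sup>2" for p
  proof (cases "pr p")
    case True
    have "(snd e p * (1 + k' p * int p) mod (int p)\<^sup>2 * (1 + k p * int p)) mod (int p)\<^sup>2
        = (snd e p * (1 + k' p * int p) * (1 + k p * int p)) mod (int p)\<^sup>2"
      by (simp add: mod_mult_left_eq)
    also have "\<dots> = (snd e p * (1 + ((k p + k' p) mod int p) * int p)) mod (int p)\<^sup>2"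
      by (rule int_key)
    finally show ?thesis using True by simp
  next
    case False
    then show ?thesis using EsetD(3)[OF e] by simp
  qed
  then show ?thesis by (simp add: Ealpha_def)
qed

lemma Ealpha_one: "e \<in> Eset \<Longrightarrow> Ealpha \<one>\<^bsub>PG\<^esub> e = e"
  unfolding Ealpha_def
proof -
  assume e: "e \<in> Eset"
  have "(snd e p * (1 + (\<one>\<^bsub>PG\<^esub>) p * int p)) mod (int p)\<^sup>2 = snd e p" for p
    by (cases "pr p") (simp_all add: e Eset_red EsetD(3))
  then show "(fst e, \<lambda>p. snd e p * (1 + (\<one>\<^bsub>PG\<^esub>) p * int p) mod (int p)\<^sup>2) = e"
    by (simp add: prod_eq_iff)
qed

lemma sig_comp: "k \<in> carrier PG \<Longrightarrow> k' \<in> carrier PG \<Longrightarrow> sig k (sig k' x) = sig (k \<otimes>\<^bsub>PG\<^esub> k') x"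
  by (simp add: sig_def Ealpha_Eset Ealpha_comp)

lemma sig_one: "sig \<one>\<^bsub>PG\<^esub> = (\<lambda>x. x)"
  by (simp add: sig_def Ealpha_one fun_eq_iff del: one_product_group)

lemma sig_hom: "sig k \<in> hom A A"
  by (simp add: hom_def sig_def Ealpha_add Ealpha_Eset Eadd_Eset)

lemma sig_bij: assumes k: "k \<in> carrier PG" shows "bij (sig k)"
proof -
  interpret PGg: group PG by (rule PG_group)
  let ?k' = "inv\<^bsub>PG\<^esub> k"
  have k': "?k' \<in> carrier PG" using k by (rule PGg.inv_closed)
  have r: "k \<otimes>\<^bsub>PG\<^esub> ?k' = \<one>\<^bsub>PG\<^esub>" using k by (rule PGg.r_inv)
  have l: "?k' \<otimes>\<^bsub>PG\<^esub> k = \<one>\<^bsub>PG\<^esub>" using k by (rule PGg.l_inv)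
  have a: "sig k \<circ> sig ?k' = id"
    by (rule ext) (simp only: o_apply id_apply sig_comp[OF k k'] r sig_one)
  have b: "sig ?k' \<circ> sig k = id"
    by (rule ext) (simp only: o_apply id_apply sig_comp[OF k' k] l sig_one)
  show ?thesis by (rule o_bij[OF b a])
qed

lemma sig_auto: "k \<in> carrier PG \<Longrightarrow> sig k \<in> auto A"
  using sig_bij[of k] sig_hom[of k] by (simp add: auto_def Bij_def)

lemma AutoGroup_mult: "f \<in> auto A \<Longrightarrow> g \<in> auto A \<Longrightarrow> f \<otimes>\<^bsub>AutoGroup A\<^esub> g = (\<lambda>x. f (g x))"
  by (simp add: AutoGroup_def BijGroup_def auto_def compose_def restrict_def)

lemma AutoGroup_one: "\<one>\<^bsub>AutoGroup A\<^esub> = (\<lambda>x. x)"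
  by (simp add: AutoGroup_def BijGroup_def restrict_def)

lemma AutoGroup_group: "group (AutoGroup A)"
  by (rule AG.AutoGroup)

lemma sig_in_hom: "sig \<in> hom PG (AutoGroup A)"
proof -
  have "sig k \<in> carrier (AutoGroup A)" if "k \<in> carrier PG" for k
    using sig_auto[OF that] by (simp add: AutoGroup_def)
  moreover have "sig (k \<otimes>\<^bsub>PG\<^esub> k') = sig k \<otimes>\<^bsub>AutoGroup A\<^esub> sig k'"
    if "k \<in> carrier PG" "k' \<in> carrier PG" for k k'
    using that by (simp add: AutoGroup_mult sig_auto sig_comp fun_eq_iff del: mult_product_group)
  ultimately show ?thesis by (auto simp: hom_def)
qed

definition ep :: "nat \<Rightarrow> E" where "ep p = (0, \<lambda>q. if q = p then 1 else 0)"

lemma ep_Eset: "pr p \<Longrightarrow> ep p \<in> Eset"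
proof -
  assume p: "pr p"
  then have "1 < int p ^ 2" using prime_gt_1_nat[OF p]
    by (metis of_nat_1 of_nat_less_iff one_less_power pos2 zero_less_numeral)
  moreover have "{q. snd (ep p) q \<noteq> 0} \<subseteq> {p}" by (auto simp: ep_def)
  ultimately show ?thesis using p by (auto simp: Eset_def ep_def intro: finite_subset)
qed

lemma one_plus_small:
  assumes p: "pr p" and c: "0 \<le> c" "c < int p"
  shows "(1 + c * int p) mod (int p ^ 2) = 1 + c * int p"
proof -
  have "c \<le> int p - 1" using c by simp
  then have "c * int p \<le> (int p - 1) * int p" by (rule mult_right_mono) simp
  moreover have "int p \<ge> 2" using prime_ge_2_nat[OF p] by simp
  ultimately have "1 + c * int p < int p ^ 2" by (simp add: power2_eq_square algebra_simps)
  moreover have "0 \<le> 1 + c * int p" using c by simp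
  ultimately show ?thesis by simp
qed

lemma snd_Ealpha_ep:
  assumes p: "pr p" and k: "k \<in> carrier PG" shows "snd (Ealpha k (ep p)) p = 1 + k p * int p"
proof -
  have kb: "0 \<le> k p" "k p < int p" using k p unfolding carrier_PG by auto
  show ?thesis using one_plus_small[OF p kb] by (simp add: Ealpha_def ep_def)
qed

lemma sig_inj: "inj_on sig (carrier PG)"
proof (rule inj_onI)
  fix k k' assume k: "k \<in> carrier PG" and k': "k' \<in> carrier PG" and eq: "sig k = sig k'"
  have "k p = k' p" for p
  proof (cases "pr p")
    case True
    have "sig k (enc (ep p)) = sig k' (enc (ep p))" using eq by simp
    then have "Ealpha k (ep p) = Ealpha k' (ep p)"
      using True by (simp add: sig_def ep_Eset Ealpha_Eset enc_inj)
    then have "snd (Ealpha k (ep p)) p = snd (Ealpha k' (ep p)) p" by simp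
    then show ?thesis using True k k' by (simp add: snd_Ealpha_ep)
  next
    case False
    then show ?thesis using k k' unfolding carrier_PG extensional_def by simp
  qed
  then show "k = k'" by blast
qed

interpretation PGi: group PG by (rule PG_group)

lemma PG_pow: "k \<in> carrier PG \<Longrightarrow> k [^]\<^bsub>PG\<^esub> (n::nat) = (\<lambda>p\<in>nat_primes. (int n * k p) mod int p)"
proof (induction n)
  case 0
  then show ?case by simp
next
  case (Suc n)
  then have "k [^]\<^bsub>PG\<^esub> Suc n = (\<lambda>p\<in>nat_primes. ((\<lambda>p\<in>nat_primes. (int n * k p) mod int p) p + k p) mod int p)"
    by simp
  also have "\<dots> = (\<lambda>p\<in>nat_primes. (int (Suc n) * k p) mod int p)"
    by (rule restrict_ext) (simp add: mod_add_left_eq mod_add_right_eq algebra_simps)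
  finally show ?case .
qed

definition SF :: "(nat \<Rightarrow> int) set" where
  "SF = {k \<in> carrier PG. finite {p. pr p \<and> k p \<noteq> 0}}"

lemma carrier_SG: "carrier (sum_group nat_primes integer_mod_group) = SF"
  by (simp add: carrier_sum_group SF_def)

lemma PG_torsion:
  assumes k: "k \<in> carrier PG"
  shows "(\<exists>n::nat. n > 0 \<and> k [^]\<^bsub>PG\<^esub> n = \<one>\<^bsub>PG\<^esub>) \<longleftrightarrow> finite {p. pr p \<and> k p \<noteq> 0}"
proof
  assume "\<exists>n::nat. n > 0 \<and> k [^]\<^bsub>PG\<^esub> n = \<one>\<^bsub>PG\<^esub>"
  then obtain n :: nat where n: "n > 0" and eq: "k [^]\<^bsub>PG\<^esub> n = \<one>\<^bsub>PG\<^esub>" by blast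
  have "p \<le> n" if p: "pr p" and kp: "k p \<noteq> 0" for p
  proof -
    have "(\<lambda>p\<in>nat_primes. (int n * k p) mod int p) p = (\<lambda>p\<in>nat_primes. 0) p"
      using eq PG_pow[OF k, of n] by simp
    then have "(int n * k p) mod int p = 0" using p by simp
    then have d: "int p dvd int n * k p" by (simp add: mod_eq_0_iff_dvd)
    have pi: "Factorial_Ring.prime (int p)" using p by simp
    have kr: "0 < k p" "k p < int p" using k p kp unfolding carrier_PG by auto
    have "\<not> int p dvd k p" using kr zdvd_imp_le by fastforce
    then have "int p dvd int n" using d pi prime_dvd_mult_iff by blast
    then have "p dvd n" by simp
    then show "p \<le> n" using n by (rule dvd_imp_le)
  qed
  then have "{p. pr p \<and> k p \<noteq> 0} \<subseteq> {..n}" by auto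
  then show "finite {p. pr p \<and> k p \<noteq> 0}" using finite_subset by blast
next
  assume fin: "finite {p. pr p \<and> k p \<noteq> 0}"
  define S where "S = {p. pr p \<and> k p \<noteq> 0}"
  define n where "n = \<Prod>S"
  have n: "n > 0" unfolding n_def S_def using prime_gt_0_nat by (intro prod_pos) auto
  have z0: "(int n * k p) mod int p = 0" if "pr p" for p
  proof (cases "p \<in> S")
    case True
    then have "p dvd n" unfolding n_def using fin S_def by (intro dvd_prodI) auto
    then have "int p dvd int n * k p" by simp
    then show ?thesis by (simp add: mod_eq_0_iff_dvd)
  next
    case False
    then show ?thesis using that by (simp add: S_def)
  qed
  have "k [^]\<^bsub>PG\<^esub> n = (\<lambda>p\<in>nat_primes. 0)"
    unfolding PG_pow[OF k] by (rule restrict_ext) (simp add: z0)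
  then have "k [^]\<^bsub>PG\<^esub> n = \<one>\<^bsub>PG\<^esub>" by simp
  then show "\<exists>n::nat. n > 0 \<and> k [^]\<^bsub>PG\<^esub> n = \<one>\<^bsub>PG\<^esub>" using n by blast
qed

lemma pow_upd: "x [^]\<^bsub>G\<lparr>carrier := S\<rparr>\<^esub> (n::nat) = x [^]\<^bsub>G\<^esub> n"
  by (induction n) simp_all

lemma sig_pow: "k \<in> carrier PG \<Longrightarrow> sig k [^]\<^bsub>AutoGroup A\<^esub> (n::nat) = sig (k [^]\<^bsub>PG\<^esub> n)"
  using hom_nat_pow[OF sig_in_hom _ PG_group AutoGroup_group] by simp

lemma sig_eq_one_iff: "k \<in> carrier PG \<Longrightarrow> sig k = \<one>\<^bsub>AutoGroup A\<^esub> \<longleftrightarrow> k = \<one>\<^bsub>PG\<^esub>"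
  using sig_inj PGi.one_closed sig_one AutoGroup_one
  by (metis inj_on_contraD)

abbreviation Sig :: "(nat \<Rightarrow> nat) set" where "Sig \<equiv> sig ` carrier PG"

lemma torsion_Sig: "torsion_part ((AutoGroup A)\<lparr>carrier := Sig\<rparr>) = sig ` SF"
proof -
  have "(\<exists>n::nat. 0 < n \<and> sig k [^]\<^bsub>(AutoGroup A)\<lparr>carrier := Sig\<rparr>\<^esub> n = \<one>\<^bsub>(AutoGroup A)\<lparr>carrier := Sig\<rparr>\<^esub>)
        \<longleftrightarrow> k \<in> SF" if k: "k \<in> carrier PG" for k
  proof -
    have step: "(sig k [^]\<^bsub>(AutoGroup A)\<lparr>carrier := Sig\<rparr>\<^esub> n = \<one>\<^bsub>(AutoGroup A)\<lparr>carrier := Sig\<rparr>\<^esub>)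
        \<longleftrightarrow> (k [^]\<^bsub>PG\<^esub> n = \<one>\<^bsub>PG\<^esub>)" for n :: nat
    proof -
      have e1: "sig k [^]\<^bsub>(AutoGroup A)\<lparr>carrier := Sig\<rparr>\<^esub> n = sig (k [^]\<^bsub>PG\<^esub> n)"
        by (simp only: pow_upd sig_pow[OF k])
      have e2: "\<one>\<^bsub>(AutoGroup A)\<lparr>carrier := Sig\<rparr>\<^esub> = \<one>\<^bsub>AutoGroup A\<^esub>" by simp
      show ?thesis by (simp only: e1 e2 sig_eq_one_iff[OF PGi.nat_pow_closed[OF k]])
    qed
    have "(\<exists>n::nat. 0 < n \<and> sig k [^]\<^bsub>(AutoGroup A)\<lparr>carrier := Sig\<rparr>\<^esub> n = \<one>\<^bsub>(AutoGroup A)\<lparr>carrier := Sig\<rparr>\<^esub>)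
        \<longleftrightarrow> (\<exists>n::nat. 0 < n \<and> k [^]\<^bsub>PG\<^esub> n = \<one>\<^bsub>PG\<^esub>)"
      by (simp only: step)
    also have "\<dots> \<longleftrightarrow> k \<in> SF" using PG_torsion[OF k] k by (simp add: SF_def)
    finally show ?thesis .
  qed
  then show ?thesis unfolding torsion_part_def using SF_def by auto
qed

lemma zero_Eset[simp]: "(0::int, \<lambda>p::nat. 0::int) \<in> Eset"
  by (simp add: Eset_def)

lemma Eset_I:
  assumes "\<And>p. pr p \<Longrightarrow> 0 \<le> h p \<and> h p < int p ^ 2" "\<And>p. \<not> pr p \<Longrightarrow> h p = 0" "finite {p. h p \<noteq> 0}"
  shows "(n, h) \<in> Eset"
  using assms by (simp add: Eset_def)

lemma Eset_restr:
  assumes e: "e \<in> Eset"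
  shows "(n, \<lambda>p. if P p then 0 else snd e p) \<in> Eset" "(n, \<lambda>p. if P p then snd e p else 0) \<in> Eset"
proof -
  have f: "finite {p. snd e p \<noteq> 0}" using EsetD(4)[OF e] .
  have "{p. (if P p then 0 else snd e p) \<noteq> 0} \<subseteq> {p. snd e p \<noteq> 0}" by auto
  then have f1: "finite {p. (if P p then 0 else snd e p) \<noteq> 0}" using f finite_subset by blast
  show "(n, \<lambda>p. if P p then 0 else snd e p) \<in> Eset"
    by (rule Eset_I[OF _ _ f1]) (simp_all add: EsetD(1,2,3)[OF e])
  have "{p. (if P p then snd e p else 0) \<noteq> 0} \<subseteq> {p. snd e p \<noteq> 0}" by auto
  then have f2: "finite {p. (if P p then snd e p else 0) \<noteq> 0}" using f finite_subset by blast
  show "(n, \<lambda>p. if P p then snd e p else 0) \<in> Eset"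
    by (rule Eset_I[OF _ _ f2]) (simp_all add: EsetD(1,2,3)[OF e])
qed

lemma dec_sig: "dec (sig k x) = Ealpha k (dec x)"
  by (simp add: sig_def Ealpha_Eset)

lemma FAut_sig_if:
  assumes k: "k \<in> carrier PG" and fin: "finite {p. pr p \<and> k p \<noteq> 0}"
  shows "sig k \<in> FAut A"
proof -
  define S where "S = {p. pr p \<and> k p \<noteq> 0}"
  define H where "H = {x. \<forall>p\<in>S. snd (dec x) p = 0}"
  have sub: "subgroup H A"
  proof (rule AG.subgroupI)
    show "H \<subseteq> carrier A" by simp
    have "\<one>\<^bsub>A\<^esub> \<in> H" by (simp add: H_def Ezero_def)
    then show "H \<noteq> {}" by blast
    show "inv\<^bsub>A\<^esub> a \<in> H" if "a \<in> H" for a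
      using that by (simp add: H_def dec_inv Esm_def)
    show "a \<otimes>\<^bsub>A\<^esub> b \<in> H" if "a \<in> H" "b \<in> H" for a b
      using that dec_mult[of a b] by (simp del: A_simps add: H_def Eadd_def)
  qed
  have fixH: "sig k x = x" if "x \<in> H" for x
  proof -
    have "snd (Ealpha k (dec x)) p = snd (dec x) p" for p
    proof (cases "p \<in> S")
      case True
      then show ?thesis using that by (simp add: H_def Ealpha_def)
    next
      case False
      show ?thesis
      proof (cases "pr p")
        case True
        then have "k p = 0" using False by (simp add: S_def)
        then show ?thesis by (simp add: Ealpha_def Eset_red)
      next
        case False
        then show ?thesis by (simp add: Ealpha_def EsetD(3))
      qed
    qed
    then have "Ealpha k (dec x) = dec x" by (simp add: prod_eq_iff fun_eq_iff Ealpha_def)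
    then show ?thesis by (metis dec_sig dec_inj)
  qed
  define G where "G = (\<lambda>h. \<lambda>p. if p \<in> S then h p else 0) ` (PiE S (\<lambda>p. {0..<int p ^ 2}))"
  have finG: "finite G" using fin unfolding G_def S_def by (intro finite_imageI finite_PiE) auto
  have "rcosets\<^bsub>A\<^esub> H \<subseteq> (\<lambda>g. H #>\<^bsub>A\<^esub> enc (0, g)) ` G"
  proof
    fix C assume "C \<in> rcosets\<^bsub>A\<^esub> H"
    then obtain a where C: "C = H #>\<^bsub>A\<^esub> a" by (auto simp: RCOSETS_def)
    define e where "e = dec a"
    have e: "e \<in> Eset" by (simp add: e_def)
    define g where "g = (\<lambda>p. if p \<in> S then snd e p else 0)"
    define h where "h = enc (fst e, \<lambda>p. if p \<in> S then 0 else snd e p)"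
    have ge: "(0, g) \<in> Eset" using Eset_restr(2)[OF e] by (simp add: g_def)
    have he: "(fst e, \<lambda>p. if p \<in> S then 0 else snd e p) \<in> Eset" using Eset_restr(1)[OF e] .
    have hH: "h \<in> H" using he by (simp add: H_def h_def)
    have "dec (h \<otimes>\<^bsub>A\<^esub> enc (0, g)) = Eadd (fst e, \<lambda>p. if p \<in> S then 0 else snd e p) (0, g)"
      using he ge by (simp only: dec_mult h_def dec_enc)
    also have "\<dots> = e" by (auto simp: Eadd_def prod_eq_iff g_def Eset_red[OF e])
    finally have "dec (h \<otimes>\<^bsub>A\<^esub> enc (0, g)) = e" .
    then have a: "a = h \<otimes>\<^bsub>A\<^esub> enc (0, g)" by (metis e_def dec_inj)
    have "C = (H #>\<^bsub>A\<^esub> h) #>\<^bsub>A\<^esub> enc (0, g)"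
      using C a AG.coset_mult_assoc[of H h "enc (0, g)"] by simp
    also have "\<dots> = H #>\<^bsub>A\<^esub> enc (0, g)" using AG.coset_join2[of h H] sub hH by simp
    finally have C': "C = H #>\<^bsub>A\<^esub> enc (0, g)" .
    have "restrict (snd e) S \<in> PiE S (\<lambda>p. {0..<int p ^ 2})"
      using e by (auto simp: S_def EsetD)
    moreover have "g = (\<lambda>p. if p \<in> S then restrict (snd e) S p else 0)"
      by (simp add: g_def fun_eq_iff)
    ultimately have "g \<in> G" unfolding G_def by blast
    then show "C \<in> (\<lambda>g. H #>\<^bsub>A\<^esub> enc (0, g)) ` G" using C' by blast
  qed
  then have "finite (rcosets\<^bsub>A\<^esub> H)" using finG finite_subset by blast
  then show ?thesis using sub fixH sig_auto[OF k] unfolding FAut_def by blast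
qed

lemma FAut_sig_only:
  assumes k: "k \<in> carrier PG" and F: "sig k \<in> FAut A"
  shows "finite {p. pr p \<and> k p \<noteq> 0}"
proof (rule ccontr)
  define S where "S = {p. pr p \<and> k p \<noteq> 0}"
  assume "infinite {p. pr p \<and> k p \<noteq> 0}"
  then have inf: "infinite S" by (simp add: S_def)
  obtain H where H: "subgroup H A" "finite (rcosets\<^bsub>A\<^esub> H)" "\<And>x. x \<in> H \<Longrightarrow> sig k x = x"
    using F unfolding FAut_def by blast
  define F where "F = (\<lambda>p. H #>\<^bsub>A\<^esub> enc (ep p))"
  have "F ` S \<subseteq> rcosets\<^bsub>A\<^esub> H" by (auto simp: RCOSETS_def F_def)
  then have "finite (F ` S)" using H(2) finite_subset by blast
  then have "\<not> inj_on F S" using inf finite_imageD by blast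
  then obtain p q where pq: "p \<in> S" "q \<in> S" "p \<noteq> q" "F p = F q"
    unfolding inj_on_def by blast
  have pp: "pr p" and qp: "pr q" and kp: "k p \<noteq> 0" using pq by (auto simp: S_def)
  let ?z = "enc (ep p) \<otimes>\<^bsub>A\<^esub> inv\<^bsub>A\<^esub> (enc (ep q))"
  have "enc (ep p) \<in> H #>\<^bsub>A\<^esub> enc (ep q)"
    using AG.rcos_self[of "enc (ep p)" H] H(1) pq(4) by (simp add: F_def)
  then have zH: "?z \<in> H" using subgroup.rcos_module_imp[OF H(1) AG.is_group] by simp
  have p1: "(1::int) < int p ^ 2" using prime_gt_1_nat[OF pp]
    by (metis of_nat_1 of_nat_less_iff one_less_power pos2 zero_less_numeral)
  have dz: "dec ?z = Eadd (ep p) (Esm (-1) (ep q))"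
    by (simp add: dec_inv ep_Eset pp qp Eadd_Eset Esm_Eset)
  have "snd (dec ?z) p = snd (Eadd (ep p) (Esm (-1) (ep q))) p" by (simp only: dz)
  also have "\<dots> = 1" using p1 pq(3) by (simp add: Eadd_def Esm_def ep_def)
  finally have s1: "snd (dec ?z) p = 1" .
  have fx: "Ealpha k (dec ?z) = dec ?z" using H(3)[OF zH] dec_sig[of k ?z] by simp
  have "(1 + k p * int p) mod (int p ^ 2) = snd (Ealpha k (dec ?z)) p"
    by (simp only: Ealpha_def snd_conv s1 mult_1)
  also have "\<dots> = 1" by (simp only: fx s1)
  finally have m1: "(1 + k p * int p) mod (int p ^ 2) = 1" .
  have kb: "0 \<le> k p" "k p < int p" using k pp unfolding carrier_PG by auto
  have "1 + k p * int p = 1" using one_plus_small[OF pp kb] m1 by simp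
  then show False using kp prime_gt_0_nat[OF pp] by simp
qed

lemma FAut_sig: "k \<in> carrier PG \<Longrightarrow> sig k \<in> FAut A \<longleftrightarrow> k \<in> SF"
  using FAut_sig_if FAut_sig_only by (auto simp: SF_def)

definition del :: "(nat \<Rightarrow> int) \<Rightarrow> nat \<Rightarrow> nat" where
  "del k = (\<lambda>x. enc (Edelta k (dec x)))"

lemma dec_del: "dec (del k x) = Edelta k (dec x)"
  by (simp add: del_def Edelta_Eset)

lemma Ealpha_delta: "Ealpha k e = Eadd (Edelta k e) e"
  by (simp add: Ealpha_def Edelta_def Eadd_def mod_add_left_eq mod_add_right_eq algebra_simps)

lemma sig_del: "sig k x = del k x \<otimes>\<^bsub>A\<^esub> x"
  by (metis dec_inj dec_mult dec_sig dec_del Ealpha_delta)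

lemma Edelta_add: "Edelta k (Eadd a b) = Eadd (Edelta k a) (Edelta k b)"
  by (simp add: Edelta_def Eadd_def mod_mult_left_eq mod_add_eq distrib_right)

lemma del_mult: "del k (x \<otimes>\<^bsub>A\<^esub> y) = del k x \<otimes>\<^bsub>A\<^esub> del k y"
  by (metis dec_inj dec_mult dec_del Edelta_add)

lemma Edelta_Esm: "Edelta k (Esm i e) = Esm i (Edelta k e)"
proof -
  have "((i * snd e p) mod (int p)\<^sup>2 * (k p * int p)) mod (int p)\<^sup>2
        = (i * (snd e p * (k p * int p) mod (int p)\<^sup>2)) mod (int p)\<^sup>2" for p
  proof -
    have "((i * snd e p) mod (int p)\<^sup>2 * (k p * int p)) mod (int p)\<^sup>2 = (i * snd e p * (k p * int p)) mod (int p)\<^sup>2"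
      by (simp add: mod_mult_left_eq)
    also have "\<dots> = (i * (snd e p * (k p * int p))) mod (int p)\<^sup>2" by (simp add: mult.assoc)
    also have "\<dots> = (i * (snd e p * (k p * int p) mod (int p)\<^sup>2)) mod (int p)\<^sup>2"
      by (simp add: mod_mult_right_eq)
    finally show ?thesis .
  qed
  then show ?thesis by (simp add: Edelta_def Esm_def)
qed

lemma del_pow: "del k (x [^]\<^bsub>A\<^esub> (i::int)) = del k x [^]\<^bsub>A\<^esub> i"
  by (metis dec_inj dec_pow_int dec_del Edelta_Esm)

lemma del_T:
  assumes Y: "subgroup Y A" and y: "y \<in> Y" and f0: "fst (dec y) = 0" and k: "k \<in> carrier PG"
  shows "del k y \<in> Y"
proof -
  define e where "e = dec y"
  have e: "e \<in> Eset" by (simp add: e_def)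
  define S where "S = supp e"
  have finS: "finite S" using supp_finite[OF e] by (simp add: S_def)
  have primS: "\<And>p. p \<in> S \<Longrightarrow> pr p" using supp_prime[OF e] by (simp add: S_def)
  have cop: "\<forall>p\<in>S. \<forall>q\<in>S. p \<noteq> q \<longrightarrow> coprime (p^2) (q^2)"
  proof (intro ballI impI)
    fix p q assume "p \<in> S" "q \<in> S" "p \<noteq> q"
    then have "coprime p q" using primS primes_coprime by blast
    then show "coprime (p^2) (q^2)" by simp
  qed
  obtain x :: nat where x: "\<forall>p\<in>S. [x = nat (k p) * p] (mod p^2)"
    using chinese_remainder_nat[where u="\<lambda>p. nat (k p) * p", OF finS cop] by blast
  have "snd (Edelta k e) p = snd (Esm (int x) e) p" for p
  proof (cases "p \<in> S")
    case True
    have pp: "pr p" using primS[OF True] .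
    have kp: "0 \<le> k p" using k pp unfolding carrier_PG by simp
    have "[int x = int (nat (k p) * p)] (mod int (p^2))"
      using x True by (simp only: cong_int_iff)
    then have c: "[int x = k p * int p] (mod (int p ^ 2))" using kp by simp
    have "[int x * snd e p = k p * int p * snd e p] (mod (int p ^ 2))"
      by (rule cong_mult[OF c cong_refl])
    then show ?thesis by (simp add: Edelta_def Esm_def cong_def ac_simps)
  next
    case False
    then show ?thesis by (simp add: Edelta_def Esm_def S_def supp_def)
  qed
  moreover have "fst (Edelta k e) = fst (Esm (int x) e)" using f0 by (simp add: Edelta_def Esm_def e_def)
  ultimately have "Edelta k e = Esm (int x) e" by (simp add: prod_eq_iff fun_eq_iff)
  then have "del k y = y [^]\<^bsub>A\<^esub> (int x)" by (metis dec_inj dec_pow_int dec_del e_def)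
  then show ?thesis using AG.subgroup_int_pow_closed[OF Y y] by simp
qed

lemma r_coset_upd: "H #>\<^bsub>G\<lparr>carrier := S\<rparr>\<^esub> a = H #>\<^bsub>G\<^esub> a"
  by (simp add: r_coset_def)

lemma coset_absorb:
  assumes Y: "subgroup Y A" and y: "y \<in> Y"
  shows "Y #>\<^bsub>A\<^esub> (y \<otimes>\<^bsub>A\<^esub> c) = Y #>\<^bsub>A\<^esub> c"
proof -
  have "Y #>\<^bsub>A\<^esub> (y \<otimes>\<^bsub>A\<^esub> c) = (Y #>\<^bsub>A\<^esub> y) #>\<^bsub>A\<^esub> c"
    using AG.coset_mult_assoc[of Y y c] by simp
  also have "\<dots> = Y #>\<^bsub>A\<^esub> c" using AG.coset_join2[of y Y] Y y by simp
  finally show ?thesis .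
qed

lemma finite_cosets_del:
  assumes Y: "subgroup Y A" and k: "k \<in> carrier PG"
  shows "finite ((\<lambda>y. Y #>\<^bsub>A\<^esub> del k y) ` Y)"
proof (cases "\<forall>y\<in>Y. fst (dec y) = 0")
  case True
  have "(\<lambda>y. Y #>\<^bsub>A\<^esub> del k y) ` Y \<subseteq> {Y}"
    using True del_T[OF Y _ _ k] AG.coset_join2[of _ Y] Y by auto
  then show ?thesis using finite_subset by blast
next
  case False
  then obtain y1 where y1: "y1 \<in> Y" "fst (dec y1) \<noteq> 0" by blast
  define Q where "Q = (\<lambda>n::nat. n > 0 \<and> (\<exists>y\<in>Y. fst (dec y) = int n))"
  have "\<exists>n. Q n"
  proof (cases "fst (dec y1) > 0")
    case True
    then show ?thesis using y1 unfolding Q_def by (intro exI[of _ "nat (fst (dec y1))"]) auto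
  next
    case False
    have "inv\<^bsub>A\<^esub> y1 \<in> Y" by (rule subgroup.m_inv_closed[OF Y y1(1)])
    moreover have "fst (dec (inv\<^bsub>A\<^esub> y1)) = - fst (dec y1)" by (simp add: dec_inv Esm_def)
    ultimately show ?thesis using False y1 unfolding Q_def
      by (intro exI[of _ "nat (- fst (dec y1))"]) auto
  qed
  define d where "d = (LEAST n. Q n)"
  have Qd: "Q d" unfolding d_def using \<open>\<exists>n. Q n\<close> by (rule LeastI_ex)
  have dmin: "\<And>n. Q n \<Longrightarrow> d \<le> n" unfolding d_def by (rule Least_le)
  obtain y0 where y0: "y0 \<in> Y" "fst (dec y0) = int d" and d0: "d > 0" using Qd unfolding Q_def by blast
  define c where "c = del k y0"
  define M where "M = nat (Mk (dec c))"
  have Mpos: "M > 0" using Mk_pos[of "dec c"] by (simp add: M_def)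
  have fc: "fst (dec c) = 0" by (simp add: c_def dec_del Edelta_def)
  have "dec (c [^]\<^bsub>A\<^esub> M) = Esm (int M) (dec c)" by (simp add: dec_pow_nat)
  also have "\<dots> = (int M * fst (dec c), \<lambda>p. 0)"
    by (rule Esm_kill[OF dec_Eset]) (simp add: M_def Mk_dvd Mk_pos less_imp_le)
  also have "\<dots> = dec \<one>\<^bsub>A\<^esub>" using fc by (simp add: Ezero_def)
  finally have cM: "c [^]\<^bsub>A\<^esub> M = \<one>\<^bsub>A\<^esub>" by (simp add: dec_inj)
  have cpow: "c [^]\<^bsub>A\<^esub> (q::int) \<in> (\<lambda>i::nat. c [^]\<^bsub>A\<^esub> i) ` {..<M}" for q
  proof -
    have "q = int M * (q div int M) + q mod int M" by simp
    then have "c [^]\<^bsub>A\<^esub> q = c [^]\<^bsub>A\<^esub> (int M * (q div int M)) \<otimes>\<^bsub>A\<^esub> c [^]\<^bsub>A\<^esub> (q mod int M)"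
      by (metis AG.int_pow_mult UNIV_I A_simps(1))
    also have "c [^]\<^bsub>A\<^esub> (int M * (q div int M)) = \<one>\<^bsub>A\<^esub>"
      by (metis AG.int_pow_pow AG.int_pow_one UNIV_I A_simps(1) cM int_pow_int)
    also have "c [^]\<^bsub>A\<^esub> (q mod int M) = c [^]\<^bsub>A\<^esub> (nat (q mod int M))"
      using Mpos by (metis int_pow_int int_nat_eq pos_mod_sign of_nat_0_less_iff)
    finally have c1: "c [^]\<^bsub>A\<^esub> q = \<one>\<^bsub>A\<^esub> \<otimes>\<^bsub>A\<^esub> c [^]\<^bsub>A\<^esub> (nat (q mod int M))" .
    then have "c [^]\<^bsub>A\<^esub> q = c [^]\<^bsub>A\<^esub> (nat (q mod int M))" by (metis AG.l_one UNIV_I A_simps(1))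
    moreover have "nat (q mod int M) < M" using Mpos by (simp add: nat_less_iff)
    ultimately show ?thesis by blast
  qed
  have "(\<lambda>y. Y #>\<^bsub>A\<^esub> del k y) ` Y \<subseteq> (\<lambda>i::nat. Y #>\<^bsub>A\<^esub> c [^]\<^bsub>A\<^esub> i) ` {..<M}"
  proof
    fix C assume "C \<in> (\<lambda>y. Y #>\<^bsub>A\<^esub> del k y) ` Y"
    then obtain y where y: "y \<in> Y" and C: "C = Y #>\<^bsub>A\<^esub> del k y" by blast
    define n where "n = fst (dec y)"
    define q where "q = n div int d"
    define t where "t = y \<otimes>\<^bsub>A\<^esub> y0 [^]\<^bsub>A\<^esub> (- q)"
    have tY: "t \<in> Y" unfolding t_def
      by (rule subgroup.m_closed[OF Y y AG.subgroup_int_pow_closed[OF Y y0(1)]])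
    have ft: "fst (dec t) = n mod int d"
    proof -
      have "fst (dec t) = fst (Eadd (dec y) (Esm (- q) (dec y0)))" by (simp only: t_def dec_mult dec_pow_int)
      also have "\<dots> = n + (- q) * int d" by (simp add: Eadd_def Esm_def n_def y0)
      also have "\<dots> = n mod int d" by (simp add: q_def minus_div_mult_eq_mod[symmetric] algebra_simps)
      finally show ?thesis .
    qed
    have "fst (dec t) = 0"
    proof (rule ccontr)
      assume nz: "fst (dec t) \<noteq> 0"
      have h0: "0 \<le> n mod int d" and h1: "n mod int d < int d" using d0 by simp_all
      then have "Q (nat (n mod int d))" using nz ft tY unfolding Q_def by auto
      then have "d \<le> nat (n mod int d)" by (rule dmin)
      then have "int d \<le> n mod int d" using le_nat_iff[OF h0] by simp
      then show False using h1 by linarith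
    qed
    then have dt: "del k t \<in> Y" using del_T[OF Y tY _ k] by simp
    have "del k t = del k y \<otimes>\<^bsub>A\<^esub> c [^]\<^bsub>A\<^esub> (- q)" by (simp only: t_def del_mult del_pow c_def)
    then have "del k t \<otimes>\<^bsub>A\<^esub> c [^]\<^bsub>A\<^esub> q = del k y \<otimes>\<^bsub>A\<^esub> (c [^]\<^bsub>A\<^esub> (- q) \<otimes>\<^bsub>A\<^esub> c [^]\<^bsub>A\<^esub> q)"
      by (metis AG.m_assoc UNIV_I A_simps(1))
    also have "c [^]\<^bsub>A\<^esub> (- q) \<otimes>\<^bsub>A\<^esub> c [^]\<^bsub>A\<^esub> q = \<one>\<^bsub>A\<^esub>"
      by (metis AG.int_pow_mult UNIV_I A_simps(1) add.left_inverse int_pow_0)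
    finally have "del k y = del k t \<otimes>\<^bsub>A\<^esub> c [^]\<^bsub>A\<^esub> q" by (metis AG.r_one UNIV_I A_simps(1))
    then have "C = Y #>\<^bsub>A\<^esub> c [^]\<^bsub>A\<^esub> q" using C coset_absorb[OF Y dt] by simp
    then show "C \<in> (\<lambda>i::nat. Y #>\<^bsub>A\<^esub> c [^]\<^bsub>A\<^esub> i) ` {..<M}" using cpow[of q] by auto
  qed
  then show ?thesis using finite_subset by blast
qed

lemma sig_inertial:
  assumes k: "k \<in> carrier PG" shows "inertial A (sig k)"
  unfolding inertial_def
proof (intro conjI allI impI)
  show "sig k \<in> auto A" using sig_auto[OF k] .
  fix Y assume Y: "subgroup Y A"
  have "RCOSETS (A\<lparr>carrier := set_mult A (sig k ` Y) Y\<rparr>) Y \<subseteq> (\<lambda>y. Y #>\<^bsub>A\<^esub> del k y) ` Y"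
  proof
    fix C assume "C \<in> RCOSETS (A\<lparr>carrier := set_mult A (sig k ` Y) Y\<rparr>) Y"
    then obtain a where a: "a \<in> set_mult A (sig k ` Y) Y"
      and C: "C = Y #>\<^bsub>A\<lparr>carrier := set_mult A (sig k ` Y) Y\<rparr>\<^esub> a"
      by (auto simp: RCOSETS_def)
    obtain y1 y2 where y: "y1 \<in> Y" "y2 \<in> Y" and a': "a = sig k y1 \<otimes>\<^bsub>A\<^esub> y2"
      using a by (auto simp: set_mult_def)
    have "a = (y1 \<otimes>\<^bsub>A\<^esub> y2) \<otimes>\<^bsub>A\<^esub> del k y1"
      unfolding a' sig_del by (metis AG.m_assoc AG.m_comm UNIV_I A_simps(1))
    moreover have "y1 \<otimes>\<^bsub>A\<^esub> y2 \<in> Y" by (rule subgroup.m_closed[OF Y y])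
    ultimately have "C = Y #>\<^bsub>A\<^esub> del k y1" using C coset_absorb[OF Y] by (simp add: r_coset_upd)
    then show "C \<in> (\<lambda>y. Y #>\<^bsub>A\<^esub> del k y) ` Y" using y by blast
  qed
  then show "finite (RCOSETS (A\<lparr>carrier := set_mult A (sig k ` Y) Y\<rparr>) Y)"
    using finite_cosets_del[OF Y k] finite_subset by blast
qed

lemma sg_eq: "subgroup H G \<Longrightarrow> subgroup_generated G H = G\<lparr>carrier := H\<rparr>"
proof -
  assume "subgroup H G"
  then have "carrier (subgroup_generated G H) = H" by (rule subgroup.carrier_subgroup_generated_subgroup)
  moreover have "subgroup_generated G H = G\<lparr>carrier := carrier (subgroup_generated G H)\<rparr>"
    by (simp add: subgroup_generated_def)
  ultimately show ?thesis by simp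
qed

abbreviation SG :: "(nat \<Rightarrow> int) monoid" where "SG \<equiv> sum_group nat_primes integer_mod_group"

lemma SG_group: "group SG" by (rule sum_group) simp

lemma SF_sub: "SF \<subseteq> carrier PG" by (auto simp: SF_def)

lemma sig_hom_SG: "sig \<in> hom SG (AutoGroup A)"
proof (rule homI)
  fix x assume "x \<in> carrier SG"
  then have "x \<in> SF" by (simp only: carrier_SG)
  then have "x \<in> carrier PG" using SF_sub by blast
  then show "sig x \<in> carrier (AutoGroup A)" by (rule hom_in_carrier[OF sig_in_hom])
next
  fix x y assume "x \<in> carrier SG" "y \<in> carrier SG"
  then have "x \<in> SF" "y \<in> SF" by (simp_all only: carrier_SG)
  then have xP: "x \<in> carrier PG" and yP: "y \<in> carrier PG" using SF_sub by blast+
  have eq: "x \<otimes>\<^bsub>SG\<^esub> y = x \<otimes>\<^bsub>PG\<^esub> y" by simp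
  show "sig (x \<otimes>\<^bsub>SG\<^esub> y) = sig x \<otimes>\<^bsub>AutoGroup A\<^esub> sig y"
    by (simp only: eq hom_mult[OF sig_in_hom xP yP])
qed

theorem propositionA:
  shows "\<exists>A :: nat monoid. comm_group A \<and> countable (carrier A) \<and> torsion_free_rank_one A \<and>
    (\<exists>\<Sigma>. subgroup \<Sigma> (AutoGroup A) \<and> \<Sigma> \<subseteq> IAut A \<and>
       (AutoGroup A)\<lparr>carrier := \<Sigma>\<rparr> \<cong> product_group nat_primes integer_mod_group \<and>
       \<Sigma> \<inter> FAut A = torsion_part ((AutoGroup A)\<lparr>carrier := \<Sigma>\<rparr>) \<and>
       (AutoGroup A)\<lparr>carrier := torsion_part ((AutoGroup A)\<lparr>carrier := \<Sigma>\<rparr>)\<rparr>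
          \<cong> sum_group nat_primes integer_mod_group)"
proof (intro exI conjI)
  show "comm_group A" by (rule A_comm_group)
  show "countable (carrier A)" by simp
  show "torsion_free_rank_one A" by (rule A_tfr1)
  have gh: "group_hom PG (AutoGroup A) sig"
    by (simp add: group_hom_def group_hom_axioms_def PG_group AutoGroup_group sig_in_hom)
  show sub: "subgroup Sig (AutoGroup A)" using group_hom.img_is_subgroup[OF gh] .
  show "Sig \<subseteq> IAut A"
    unfolding IAut_def using sig_inertial by (auto intro: generate.incl)
  have "sig \<in> iso PG (subgroup_generated (AutoGroup A) Sig)"
    using iso_onto_image[OF PG_group AutoGroup_group] sig_in_hom sig_inj by simp
  then have "PG \<cong> (AutoGroup A)\<lparr>carrier := Sig\<rparr>" using sg_eq[OF sub] by (simp add: is_isoI)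
  then show "(AutoGroup A)\<lparr>carrier := Sig\<rparr> \<cong> PG" by (rule group.iso_sym[OF PG_group])
  show "Sig \<inter> FAut A = torsion_part ((AutoGroup A)\<lparr>carrier := Sig\<rparr>)"
    unfolding torsion_Sig using FAut_sig SF_sub by auto
  have gh2: "group_hom SG (AutoGroup A) sig"
    by (simp add: group_hom_def group_hom_axioms_def SG_group AutoGroup_group sig_hom_SG)
  have sub2: "subgroup (sig ` SF) (AutoGroup A)"
    using group_hom.img_is_subgroup[OF gh2] by (simp add: carrier_SG)
  have "inj_on sig (carrier SG)" using sig_inj SF_sub by (simp add: carrier_SG inj_on_subset)
  then have "sig \<in> iso SG (subgroup_generated (AutoGroup A) (sig ` carrier SG))"
    using iso_onto_image[OF SG_group AutoGroup_group] sig_hom_SG by simp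
  then have "SG \<cong> (AutoGroup A)\<lparr>carrier := sig ` SF\<rparr>" using sg_eq[OF sub2] by (simp add: is_isoI carrier_SG)
  then show "(AutoGroup A)\<lparr>carrier := torsion_part ((AutoGroup A)\<lparr>carrier := Sig\<rparr>)\<rparr> \<cong> SG"
    unfolding torsion_Sig by (rule group.iso_sym[OF SG_group])
qed

end
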